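(* Let $\mathbb K$ be a field, $n\ge2$, and $\mathcal G_n$, $\mathcal N_{0,n}$, $U_m(z_g)$ as in the context. If $f\in A_{\mathbb K}(\mathcal G_n)$, then there is $m\ge1$ such that, with $U_m=\bigcup_{g\in\mathcal N_{0,n}}U_m(z_g)$, the restriction $f|_{U_m}$ is a $\mathbb K$-linear combination of the characteristic functions $1_{U_m(z_g)}$, $g\in\mathcal N_{0,n}$.
   Context: Let $X=\{\mathbf 0,\mathbf 1\}$, $X^*$ the finite words (with empty word $\varnothing$), $X^\omega$ the infinite words, $C(\eta)=\{\eta w:w\in X^\omega\}$, $\mathbf 1^m$ and $\mathbf 1^\infty$ the finite/infinite words of ones. Fix $n\ge2$, a primitive polynomial $f_n$ of degree $n$ over $\mathbb F_2$ with root $\alpha$, and $\operatorname{Tr}(\beta)=\beta+\beta^2+\dots+\beta^{2^{n-1}}\in\mathbb F_2$. $\mathfrak G_n$ is the group of automorphisms of the binary rooted tree $X^*$ generated by $a$ ($a\cdot(\mathbf 0w)=\mathbf 1w$, $a\cdot(\mathbf 1w)=\mathbf 0w$) and $\iota_n(\beta)$, $\beta\in\mathbb F_{2^n}$, where $\iota_n(\beta)\cdot(\mathbf 0w)=\mathbf 0(a^{\operatorname{Tr}(\beta)}\cdot w)$, $\iota_n(\beta)\cdot(\mathbf 1w)=\mathbf 1(\iota_n(\alpha\beta)\cdot w)$; restrictions $g|_x$ are given by $g\cdot(xw)=(g\cdot x)(g|_x\cdot w)$. $\mathcal N_{0,n}=\iota_n(\mathbb F_{2^n})$. $\mathcal G_n$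 is the groupoid of germs of the action of the inverse semigroup $\{(\eta,g,\mu)\}\cup\{0\}$ on $X^\omega$ with $(\eta,g,\mu):C(\mu)\to C(\eta)$, $\mu w\mapsto\eta(g\cdot w)$; germs $[(\eta,g,\mu),w]$, $w\in C(\mu)$, with $[(\eta,g,\mu),w]=[(\eta',g',\mu'),w']$ iff $w=w'$ and some finite prefix $\nu=\mu\epsilon=\mu'\epsilon'$ of $w$ satisfies $\eta(g\cdot\epsilon)=\eta'(g'\cdot\epsilon')$ and $g|_\epsilon=g'|_{\epsilon'}$. $\Theta(s,U)=\{[s,w]:w\in U\}$ for $s=(\eta,g,\mu)$, $U\subseteq C(\mu)$ open; these form a basis of the topology. $z_g=[(\varnothing,g,\varnothing),\mathbf 1^\infty]$ and $U_m(z_g)=\Theta((\varnothing,g,\varnothing),C(\mathbf 1^m))$. $A_{\mathbb K}(\mathcal G_n)$ is the Steinberg algebra: the $\mathbb K$-span of characteristic functions of compact open bisections of $\mathcal G_n$. *)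

theory Defs
  imports "HOL-Analysis.Analysis"
begin

type_synonym fword = "bool list"          (* finite words over X = {0,1}; False = 0, True = 1 *)
type_synonym iword = "nat \<Rightarrow> bool"
type_synonym taut  = "fword \<Rightarrow> fword"  (* tree automorphisms, acting on finite words *)
type_synonym ismel = "fword \<times> taut \<times> fword"
type_synonym germ  = "(ismel \<times> iword) set"     (* germs as equivalence classes *)

fun flipa :: taut where
  "flipa [] = []"
| "flipa (b # w) = (\<not> b) # w"

definition trace :: "nat \<Rightarrow> 'f::field \<Rightarrow> 'f" where
  "trace n \<beta> = (\<Sum>i<n. \<beta> ^ (2 ^ i))"

fun iota :: "nat \<Rightarrow> 'f::field \<Rightarrow> 'f \<Rightarrow> taut" where
  "iota n \<alpha> \<beta> [] = []"
| "iota n \<alpha> \<beta> (False # w) = False # (if trace n \<beta> = 1 then flipa w else w)"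
| "iota n \<alpha> \<beta> (True # w) = True # iota n \<alpha> (\<alpha> * \<beta>) w"

inductive_set Ggrp :: "nat \<Rightarrow> 'f::field \<Rightarrow> taut set" for n \<alpha> where
  Gid: "id \<in> Ggrp n \<alpha>"
| Ga: "flipa \<in> Ggrp n \<alpha>"
| Giota: "iota n \<alpha> \<beta> \<in> Ggrp n \<alpha>"
| Gcomp: "g \<in> Ggrp n \<alpha> \<Longrightarrow> h \<in> Ggrp n \<alpha> \<Longrightarrow> g \<circ> h \<in> Ggrp n \<alpha>"
| Ginv: "g \<in> Ggrp n \<alpha> \<Longrightarrow> inv g \<in> Ggrp n \<alpha>"

definition N0 :: "nat \<Rightarrow> 'f::field \<Rightarrow> taut set" where
  "N0 n \<alpha> = range (iota n \<alpha>)"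

definition restr :: "taut \<Rightarrow> fword \<Rightarrow> taut" where
  "restr g x = (\<lambda>v. drop (length x) (g (x @ v)))"

definition stake :: "nat \<Rightarrow> iword \<Rightarrow> fword" where
  "stake k w = map w [0..<k]"

definition sdrop :: "nat \<Rightarrow> iword \<Rightarrow> iword" where
  "sdrop k w = (\<lambda>i. w (i + k))"

definition conc :: "fword \<Rightarrow> iword \<Rightarrow> iword" where
  "conc \<eta> w = (\<lambda>i. if i < length \<eta> then \<eta> ! i else w (i - length \<eta>))"

definition cyl :: "fword \<Rightarrow> iword set" where
  "cyl \<eta> = {w. \<forall>i < length \<eta>. w i = \<eta> ! i}"

definition ones :: iword where
  "ones = (\<lambda>_. True)"

definition gact :: "taut \<Rightarrow> iword \<Rightarrow> iword" where
  "gact g w = (\<lambda>i. g (stake (Suc i) w) ! i)"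

definition cantor_open :: "iword set \<Rightarrow> bool" where
  "cantor_open U \<longleftrightarrow> (\<forall>w\<in>U. \<exists>k. cyl (stake k w) \<subseteq> U)"

text \<open>Nonzero elements of the inverse semigroup.\<close>
definition ISem :: "nat \<Rightarrow> 'f::field \<Rightarrow> ismel set" where
  "ISem n \<alpha> = {(\<eta>, g, \<mu>). g \<in> Ggrp n \<alpha>}"

fun mu :: "ismel \<Rightarrow> fword" where
  "mu (\<eta>, g, \<mu>) = \<mu>"

text \<open>The partial map (eta,g,mu): C(mu) -> C(eta).\<close>
fun ismap :: "ismel \<Rightarrow> iword \<Rightarrow> iword" where
  "ismap (\<eta>, g, \<mu>) w = conc \<eta> (gact g (sdrop (length \<mu>) w))"

fun germ_rel :: "ismel \<times> iword \<Rightarrow> ismel \<times> iword \<Rightarrow> bool" where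
  "germ_rel ((\<eta>, g, \<mu>), w) ((\<eta>', g', \<mu>'), w') \<longleftrightarrow>
     w = w' \<and> (\<exists>k. length \<mu> \<le> k \<and> length \<mu>' \<le> k \<and>
        \<mu> = take (length \<mu>) (stake k w) \<and> \<mu>' = take (length \<mu>') (stake k w) \<and>
        (let \<epsilon> = drop (length \<mu>) (stake k w); \<epsilon>' = drop (length \<mu>') (stake k w) in
          \<eta> @ g \<epsilon> = \<eta>' @ g' \<epsilon>' \<and> restr g \<epsilon> = restr g' \<epsilon>'))"

definition germ :: "nat \<Rightarrow> 'f::field \<Rightarrow> ismel \<Rightarrow> iword \<Rightarrow> germ" where
  "germ n \<alpha> s w = {(s', w'). s' \<in> ISem n \<alpha> \<and> w' \<in> cyl (mu s') \<and> germ_rel (s', w') (s, w)}"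

definition Groupoid :: "nat \<Rightarrow> 'f::field \<Rightarrow> germ set" where
  "Groupoid n \<alpha> = {germ n \<alpha> s w | s w. s \<in> ISem n \<alpha> \<and> w \<in> cyl (mu s)}"

definition Theta :: "nat \<Rightarrow> 'f::field \<Rightarrow> ismel \<Rightarrow> iword set \<Rightarrow> germ set" where
  "Theta n \<alpha> s U = (\<lambda>w. germ n \<alpha> s w) ` U"

definition germ_basis :: "nat \<Rightarrow> 'f::field \<Rightarrow> germ set set" where
  "germ_basis n \<alpha> = {Theta n \<alpha> s U | s U. s \<in> ISem n \<alpha> \<and> U \<subseteq> cyl (mu s) \<and> cantor_open U}"

definition germ_top :: "nat \<Rightarrow> 'f::field \<Rightarrow> germ topology" where
  "germ_top n \<alpha> = topology_generated_by (germ_basis n \<alpha>)"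

definition src :: "germ \<Rightarrow> iword" where
  "src \<gamma> = (THE w. \<exists>s. (s, w) \<in> \<gamma>)"

definition rng :: "germ \<Rightarrow> iword" where
  "rng \<gamma> = (THE x. \<exists>s w. (s, w) \<in> \<gamma> \<and> x = ismap s w)"

definition compact_open_bisection :: "nat \<Rightarrow> 'f::field \<Rightarrow> germ set \<Rightarrow> bool" where
  "compact_open_bisection n \<alpha> B \<longleftrightarrow>
     B \<subseteq> Groupoid n \<alpha> \<and> openin (germ_top n \<alpha>) B \<and> compactin (germ_top n \<alpha>) B \<and>
     inj_on src B \<and> inj_on rng B"

definition steinberg :: "nat \<Rightarrow> 'f::field \<Rightarrow> (germ \<Rightarrow> 'k::field) set" where
  "steinberg n \<alpha> = {f. \<exists>(I :: nat set) c B. finite I \<and>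
      (\<forall>i\<in>I. compact_open_bisection n \<alpha> (B i)) \<and>
      f = (\<lambda>\<gamma>. \<Sum>i\<in>I. c i * indicator (B i) \<gamma>)}"

definition Um :: "nat \<Rightarrow> 'f::field \<Rightarrow> nat \<Rightarrow> taut \<Rightarrow> germ set" where
  "Um n \<alpha> m g = Theta n \<alpha> ([], g, []) (cyl (replicate m True))"

end

theory Submission
  imports Defs
begin


lemma fermat_ff:
  fixes x :: "'f::{field,finite}"
  assumes "x \<noteq> 0" shows "x ^ (CARD('f) - 1) = 1"
proof -
  let ?S = "UNIV - {0::'f}"
  have bij: "bij_betw ((*) x) ?S ?S"
    unfolding bij_betw_def
  proof
    show "inj_on ((*) x) ?S" using assms by (auto simp: inj_on_def)
    show "(*) x ` ?S = ?S"
    proof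
      show "(*) x ` ?S \<subseteq> ?S" using assms by auto
      show "?S \<subseteq> (*) x ` ?S"
      proof
        fix y assume "y \<in> ?S"
        then have "y = x * (y / x)" "y / x \<in> ?S" using assms by auto
        then show "y \<in> (*) x ` ?S" by blast
      qed
    qed
  qed
  have "prod ((*) x) ?S = prod id ?S"
    using prod.reindex_bij_betw[OF bij, of id] by simp
  moreover have "prod ((*) x) ?S = x ^ card ?S * prod id ?S"
    by (simp add: prod.distrib)
  moreover have "prod id ?S \<noteq> 0" by simp
  moreover have "card ?S = CARD('f) - 1"
    by (simp add: card_Diff_subset)
  ultimately show ?thesis by auto
qed

lemma char2:
  fixes n :: nat
  assumes "n \<ge> 1" "CARD('f::{field,finite}) = 2 ^ n"
  shows "(1::'f) + 1 = 0"
proof -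
  have "odd (CARD('f) - 1)" using assms by simp
  then have "(-1::'f) ^ (CARD('f) - 1) = -1" by simp
  moreover have "(-1::'f) ^ (CARD('f) - 1) = 1" by (rule fermat_ff) simp
  ultimately have "(-1::'f) = 1" by simp
  then have "(1::'f) + 1 = 1 + -1" by simp
  then show ?thesis by simp
qed

lemma frob_ff:
  fixes x :: "'f::{field,finite}"
  assumes "CARD('f) = 2 ^ n" "n \<ge> 1"
  shows "x ^ (2 ^ n) = x"
proof (cases "x = 0")
  case True then show ?thesis using assms by simp
next
  case False
  have "x ^ (2^n) = x * x ^ (CARD('f) - 1)"
    using assms by (simp add: power_Suc[symmetric])
  also have "\<dots> = x" using fermat_ff[OF False] by simp
  finally show ?thesis .
qed

context
  fixes n :: nat
  assumes c2: "(1::'f::{field,finite}) + 1 = 0"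
begin

lemma sq_add: "((x::'f) + y) ^ 2 = x ^ 2 + y ^ 2"
proof -
  have "((x::'f) + y) ^ 2 = x^2 + y^2 + (1+1) * x * y" by (simp add: power2_eq_square algebra_simps)
  then show ?thesis using c2 by simp
qed

lemma pow2_add: "((x::'f) + y) ^ (2 ^ i) = x ^ (2^i) + y ^ (2^i)"
proof (induction i)
  case 0 then show ?case by simp
next
  case (Suc i)
  have "(x + y) ^ (2 ^ Suc i) = ((x+y) ^ (2^i)) ^ 2" by (simp add: power_mult[symmetric] mult.commute)
  also have "\<dots> = (x ^ (2^i)) ^ 2 + (y ^ (2^i)) ^ 2" using Suc sq_add by simp
  also have "\<dots> = x ^ (2 ^ Suc i) + y ^ (2 ^ Suc i)" by (simp add: power_mult[symmetric] mult.commute)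
  finally show ?case .
qed

lemma trace_add: "trace n ((x::'f) + y) = trace n x + trace n y"
  unfolding trace_def by (simp add: pow2_add sum.distrib)

lemma sum_sq: "(\<Sum>i\<in>A. (h i :: 'f)) ^ 2 = (\<Sum>i\<in>A. h i ^ 2)"
proof (induction A rule: infinite_finite_induct)
  case (insert a A) then show ?case by (simp add: sq_add)
qed auto

end

lemma trace01:
  fixes x :: "'f::{field,finite}"
  assumes "CARD('f) = 2 ^ n" "n \<ge> 1"
  shows "trace n x = 0 \<or> trace n x = 1"
proof -
  have c2: "(1::'f) + 1 = 0" using char2 assms by blast
  have "trace n x ^ 2 = (\<Sum>i<n. (x ^ (2^i)) ^ 2)"
    unfolding trace_def using sum_sq[OF c2] by blast
  also have "\<dots> = (\<Sum>i<n. x ^ (2 ^ Suc i))" by (simp add: power_mult[symmetric] mult.commute)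
  also have "\<dots> = trace n x"
  proof -
    have "(\<Sum>i<Suc n. x ^ (2 ^ i)) = x + (\<Sum>i<n. x ^ (2 ^ Suc i))"
      by (subst sum.lessThan_Suc_shift) simp
    moreover have "(\<Sum>i<Suc n. x ^ (2 ^ i)) = trace n x + x"
      unfolding trace_def using frob_ff[OF assms] by simp
    ultimately show ?thesis by (simp add: add.commute)
  qed
  finally have "trace n x * (trace n x - 1) = 0" by (simp add: power2_eq_square algebra_simps)
  then show ?thesis by auto
qed



definition aut :: "taut \<Rightarrow> bool" where
  "aut g \<longleftrightarrow> (\<forall>x. length (g x) = length x) \<and> (\<forall>k x. g (take k x) = take k (g x)) \<and> bij g"

lemma aut_len: "aut g \<Longrightarrow> length (g x) = length x" by (simp add: aut_def)
lemma aut_take: "aut g \<Longrightarrow> g (take k x) = take k (g x)" by (simp add: aut_def)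
lemma aut_bij: "aut g \<Longrightarrow> bij g" by (simp add: aut_def)

lemma aut_app: assumes "aut g" shows "g (x @ v) = g x @ restr g x v"
proof -
  have "take (length x) (g (x @ v)) = g x" using aut_take[OF assms, of "length x" "x @ v"] by simp
  then show ?thesis unfolding restr_def by (metis append_take_drop_id)
qed

lemma aut_comp: "aut g \<Longrightarrow> aut h \<Longrightarrow> aut (g \<circ> h)"
  by (simp add: aut_def bij_comp)

lemma aut_id: "aut id" by (simp add: aut_def)

lemma lam_id[simp]: "(\<lambda>a. a) = id" by (simp add: id_def)

lemma restr_append: "restr g (x @ y) = restr (restr g x) y"
  unfolding restr_def by (auto simp: add.commute)

lemma restr_comp: assumes "aut h" shows "restr (g \<circ> h) x = restr g (h x) \<circ> restr h x"
proof
  fix v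
  have e: "h (x @ v) = h x @ restr h x v" by (rule aut_app[OF assms])
  have "restr (g \<circ> h) x v = drop (length x) (g (h x @ restr h x v))"
    unfolding restr_def[of "g \<circ> h"] by (simp only: comp_apply e)
  also have "\<dots> = restr g (h x) (restr h x v)" unfolding restr_def using aut_len[OF assms] by simp
  finally show "restr (g \<circ> h) x v = (restr g (h x) \<circ> restr h x) v" by simp
qed

lemma restr_id: "restr id x = id" unfolding restr_def by auto

lemma flipa_len: "length (flipa x) = length x" by (cases x) auto
lemma flipa_take: "flipa (take k x) = take k (flipa x)" by (cases x; cases k) auto
lemma flipa_invol: "flipa (flipa x) = x" by (cases x) auto
lemma flipa_invol': "flipa \<circ> flipa = id" by (auto simp: flipa_invol)
lemma bij_invol: "f \<circ> f = id \<Longrightarrow> bij f" by (rule o_bij)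

lemma aut_flipa: "aut flipa"
  unfolding aut_def using flipa_len flipa_take bij_invol[OF flipa_invol'] by auto

lemma iota_len: "length (iota n \<alpha> \<beta> x) = length x"
proof (induction x arbitrary: \<beta>)
  case (Cons b x) then show ?case by (cases b) (auto simp: flipa_len)
qed simp

lemma iota_take: "iota n \<alpha> \<beta> (take k x) = take k (iota n \<alpha> \<beta> x)"
proof (induction x arbitrary: \<beta> k)
  case (Cons b x) then show ?case by (cases b; cases k) (auto simp: flipa_take)
qed simp

lemma iota_invol: "iota n \<alpha> \<beta> (iota n \<alpha> \<beta> x) = x"
proof (induction x arbitrary: \<beta>)
  case (Cons b x) then show ?case by (cases b) (auto simp: flipa_invol)
qed simp

lemma iota_invol': "iota n \<alpha> \<beta> \<circ> iota n \<alpha> \<beta> = id" by (auto simp: iota_invol)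

lemma aut_iota: "aut (iota n \<alpha> \<beta>)"
  unfolding aut_def using iota_len iota_take bij_invol[OF iota_invol'] by blast

lemma trace_zero: "trace n (0::'f::field) = 0"
  unfolding trace_def by (auto intro!: sum.neutral simp: zero_power)

lemma iota_zero: "iota n \<alpha> (0::'f::field) = id"
proof
  fix x show "iota n \<alpha> 0 x = id x"
  proof (induction x)
    case (Cons b x) then show ?case by (cases b) (auto simp: trace_zero)
  qed simp
qed

lemma iota_add:
  fixes x y :: "'f::{field,finite}"
  assumes "CARD('f) = 2 ^ n" "n \<ge> 1"
  shows "iota n \<alpha> x \<circ> iota n \<alpha> y = iota n \<alpha> (x + y)"
proof
  have c2: "(1::'f) + 1 = 0" using char2 assms by blast
  have key: "(trace n (x + y) = 1) = ((trace n x = 1) \<noteq> (trace n y = 1))" for x y :: 'f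
    using trace01[OF assms, of x] trace01[OF assms, of y] trace_add[OF c2, of n x y] c2 by auto
  fix w show "(iota n \<alpha> x \<circ> iota n \<alpha> y) w = iota n \<alpha> (x + y) w"
  proof (induction w arbitrary: x y)
    case (Cons b w) then show ?case
      using key[of x y] by (cases b) (auto simp: flipa_invol distrib_left)
  qed simp
qed

lemma restr_flipa: "restr flipa [b] = id" unfolding restr_def by auto
lemma restr_iota_F: "restr (iota n \<alpha> \<beta>) [False] = (if trace n \<beta> = 1 then flipa else id)"
  unfolding restr_def by auto
lemma restr_iota_T: "restr (iota n \<alpha> \<beta>) [True] = iota n \<alpha> (\<alpha> * \<beta>)"
  unfolding restr_def by auto

definition Nuc :: "nat \<Rightarrow> 'f::field \<Rightarrow> taut set" where
  "Nuc n \<alpha> = insert flipa (range (iota n \<alpha>))"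

lemma id_Nuc: "id \<in> Nuc n (\<alpha>::'f::field)"
  unfolding Nuc_def using iota_zero[of n \<alpha>, symmetric] by auto

lemma Nuc_aut: "u \<in> Nuc n \<alpha> \<Longrightarrow> aut u" unfolding Nuc_def using aut_flipa aut_iota by auto
lemma Nuc_invol: "u \<in> Nuc n \<alpha> \<Longrightarrow> u \<circ> u = id" unfolding Nuc_def using flipa_invol' iota_invol' by auto

lemma Nuc_restr1: "u \<in> Nuc n \<alpha> \<Longrightarrow> restr u [b] \<in> Nuc n \<alpha>"
  using id_Nuc[of n \<alpha>] unfolding Nuc_def
  by (cases b) (auto simp: restr_flipa restr_iota_F restr_iota_T)

lemma len1: "length x = 1 \<Longrightarrow> \<exists>c. x = [c]"
  by (cases x) auto

lemma Nuc_restr2: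
  fixes \<alpha> :: "'f::{field,finite}"
  assumes "CARD('f) = 2 ^ n" "n \<ge> 1" "u \<in> Nuc n \<alpha>" "v \<in> Nuc n \<alpha>"
  shows "restr (u \<circ> v) [b] \<in> Nuc n \<alpha>"
proof -
  have r: "restr (u \<circ> v) [b] = restr u (v [b]) \<circ> restr v [b]"
    using restr_comp Nuc_aut assms by blast
  obtain c where c: "v [b] = [c]" using len1 aut_len[OF Nuc_aut[OF assms(4)], of "[b]"] by auto
  show ?thesis
  proof (cases "u = flipa")
    case True then show ?thesis using r c restr_flipa Nuc_restr1[OF assms(4)] by simp
  next
    case u: False
    show ?thesis
    proof (cases "v = flipa")
      case True then show ?thesis using r c restr_flipa Nuc_restr1[OF assms(3)] by simp
    next
      case False
      with u assms obtain x y where xy: "u = iota n \<alpha> x" "v = iota n \<alpha> y" unfolding Nuc_def by auto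
      show ?thesis
      proof (cases b)
        case True
        then have "restr (u \<circ> v) [b] = iota n \<alpha> (\<alpha> * x) \<circ> iota n \<alpha> (\<alpha> * y)"
          using r xy c by (simp add: restr_iota_T)
        then have "restr (u \<circ> v) [b] = iota n \<alpha> (\<alpha> * x + \<alpha> * y)"
          using iota_add[OF assms(1,2)] by simp
        then show ?thesis unfolding Nuc_def by auto
      next
        case False
        then have "restr (u \<circ> v) [b] \<in> {id, flipa}"
          using r xy c flipa_invol' by (auto simp: restr_iota_F)
        then show ?thesis using id_Nuc[of n \<alpha>] unfolding Nuc_def by auto
      qed
    qed
  qed
qed

fun pw :: "taut set \<Rightarrow> nat \<Rightarrow> taut set" where
  "pw S 0 = {id}"
| "pw S (Suc L) = {u \<circ> g | u g. u \<in> S \<and> g \<in> pw S L}"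

lemma pw_SucI: "u \<in> S \<Longrightarrow> g \<in> pw S L \<Longrightarrow> u \<circ> g \<in> pw S (Suc L)"
  by (simp only: pw.simps) blast

lemma pw_comp: "g \<in> pw S L \<Longrightarrow> h \<in> pw S L' \<Longrightarrow> g \<circ> h \<in> pw S (L + L')"
proof (induction L arbitrary: g)
  case 0 then show ?case by simp
next
  case (Suc L)
  then obtain u g' where "g = u \<circ> g'" "u \<in> S" "g' \<in> pw S L" by auto
  moreover have "g' \<circ> h \<in> pw S (L + L')" using Suc.IH[of g'] Suc.prems \<open>g' \<in> pw S L\<close> by blast
  ultimately have "g \<circ> h = u \<circ> (g' \<circ> h) \<and> u \<in> S \<and> g' \<circ> h \<in> pw S (L + L')" by (simp add: comp_assoc)
  then show ?case using pw_SucI[of u S "g' \<circ> h" "L + L'"] by (metis add_Suc)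
qed

lemma pw_one: "u \<in> S \<Longrightarrow> u \<in> pw S 1"
  by (auto intro!: exI[of _ u])

lemma pw_one': "g \<in> pw S 1 \<Longrightarrow> g \<in> S" by auto

lemma pw_aut: "g \<in> pw (Nuc n \<alpha>) L \<Longrightarrow> aut g"
proof (induction L arbitrary: g)
  case 0 then show ?case by (simp add: aut_id)
next
  case (Suc L)
  then obtain u g' where "g = u \<circ> g'" "u \<in> Nuc n \<alpha>" "g' \<in> pw (Nuc n \<alpha>) L" by auto
  then show ?case using Suc.IH aut_comp Nuc_aut by blast
qed

lemma id_pw: "id \<in> pw (Nuc n \<alpha>) d"
proof (induction d)
  case (Suc d)
  have "id = id \<circ> id" by simp
  then show ?case using Suc id_Nuc by (simp only: pw.simps) blast
qed simp

lemma pw_mono: assumes "g \<in> pw (Nuc n \<alpha>) L" "L \<le> L'" shows "g \<in> pw (Nuc n \<alpha>) L'"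
proof -
  have "id \<in> pw (Nuc n \<alpha>) (L' - L)" by (rule id_pw)
  from pw_comp[OF this assms(1)] show ?thesis using assms(2) by simp
qed

lemma pw_inv: "g \<in> pw (Nuc n \<alpha>) L \<Longrightarrow> inv g \<in> pw (Nuc n \<alpha>) L"
proof (induction L arbitrary: g)
  case 0 then show ?case by simp
next
  case (Suc L)
  then obtain u g' where ug: "g = u \<circ> g'" "u \<in> Nuc n \<alpha>" "g' \<in> pw (Nuc n \<alpha>) L" by auto
  have bu: "bij u" using aut_bij Nuc_aut ug by blast
  have bg: "bij g'" using aut_bij pw_aut ug by blast
  have iu: "inv u = u" by (rule inv_unique_comp[OF Nuc_invol[OF ug(2)] Nuc_invol[OF ug(2)]])
  have "inv g = inv g' \<circ> u" using ug o_inv_distrib[OF bu bg] iu by simp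
  moreover have "inv g' \<circ> u \<in> pw (Nuc n \<alpha>) (L + 1)"
    using pw_comp[OF Suc.IH[OF ug(3)] pw_one[OF ug(2)]] .
  ultimately show ?case by (metis Suc_eq_plus1)
qed

lemma Ggrp_pw: "g \<in> Ggrp n \<alpha> \<Longrightarrow> \<exists>L. g \<in> pw (Nuc n \<alpha>) L"
proof (induction rule: Ggrp.induct)
  case Gid then show ?case by (auto intro: exI[of _ 0])
next
  case Ga then show ?case using pw_one[of flipa "Nuc n \<alpha>"] unfolding Nuc_def by blast
next
  case (Giota \<beta>) then show ?case using pw_one[of "iota n \<alpha> \<beta>" "Nuc n \<alpha>"] unfolding Nuc_def by blast
next
  case (Gcomp g h) then show ?case using pw_comp by blast
next
  case (Ginv g) then show ?case using pw_inv by blast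
qed

lemma Ggrp_aut: "g \<in> Ggrp n \<alpha> \<Longrightarrow> aut g"
  using Ggrp_pw pw_aut by blast

lemma pw_restr_step:
  fixes \<alpha> :: "'f::{field,finite}"
  assumes "CARD('f) = 2 ^ n" "n \<ge> 1"
  shows "g \<in> pw (Nuc n \<alpha>) (2 * L) \<Longrightarrow> restr g [b] \<in> pw (Nuc n \<alpha>) L"
proof (induction L arbitrary: g b)
  case 0 then show ?case by (simp add: restr_id)
next
  case (Suc L)
  from Suc.prems obtain u v h where uvh: "g = u \<circ> (v \<circ> h)" "u \<in> Nuc n \<alpha>" "v \<in> Nuc n \<alpha>"
     "h \<in> pw (Nuc n \<alpha>) (2 * L)"
    by (auto simp: numeral_2_eq_2)
  have ah: "aut h" using pw_aut uvh by blast
  obtain c where c: "h [b] = [c]" using len1 aut_len[OF ah, of "[b]"] by auto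
  have "restr g [b] = restr (u \<circ> v) [c] \<circ> restr h [b]"
    using restr_comp[OF ah, of "u \<circ> v" "[b]"] uvh c by (simp add: comp_assoc)
  moreover have "restr (u \<circ> v) [c] \<in> Nuc n \<alpha>" using Nuc_restr2[OF assms uvh(2,3)] .
  ultimately show ?case using Suc.IH[OF uvh(4)] pw_SucI by metis
qed

lemma pw_restr:
  fixes \<alpha> :: "'f::{field,finite}"
  assumes "CARD('f) = 2 ^ n" "n \<ge> 1"
  shows "g \<in> pw (Nuc n \<alpha>) (2 ^ k) \<Longrightarrow> length x = k \<Longrightarrow> restr g x \<in> Nuc n \<alpha>"
proof (induction k arbitrary: g x)
  case 0 then show ?case by (auto simp: restr_def)
next
  case (Suc k)
  then obtain b x' where x: "x = b # x'" "length x' = k" by (cases x) auto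
  have "restr g [b] \<in> pw (Nuc n \<alpha>) (2 ^ k)"
    using pw_restr_step[OF assms] Suc.prems by simp
  then have "restr (restr g [b]) x' \<in> Nuc n \<alpha>" using Suc.IH x by blast
  then show ?case using restr_append[of g "[b]" x'] x by simp
qed

lemma Nuc_restr: "u \<in> Nuc n \<alpha> \<Longrightarrow> restr u x \<in> Nuc n \<alpha>"
proof (induction x arbitrary: u)
  case Nil then show ?case by (simp add: restr_def)
next
  case (Cons b x) then show ?case using restr_append[of u "[b]" x] Cons.IH[OF Nuc_restr1[OF Cons.prems]] by simp
qed

lemma contraction:
  fixes \<alpha> :: "'f::{field,finite}"
  assumes "CARD('f) = 2 ^ n" "n \<ge> 1" "g \<in> Ggrp n \<alpha>"
  shows "\<exists>J. \<forall>x. length x \<ge> J \<longrightarrow> restr g x \<in> Nuc n \<alpha>"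
proof -
  obtain L where L: "g \<in> pw (Nuc n \<alpha>) L" using Ggrp_pw assms by blast
  have "L \<le> 2 ^ L" by simp
  then have g2: "g \<in> pw (Nuc n \<alpha>) (2 ^ L)" using pw_mono L by blast
  have "restr g x \<in> Nuc n \<alpha>" if "length x \<ge> L" for x
  proof -
    have "restr g (take L x) \<in> Nuc n \<alpha>" using pw_restr[OF assms(1,2) g2] that by simp
    then have "restr (restr g (take L x)) (drop L x) \<in> Nuc n \<alpha>" by (rule Nuc_restr)
    then show ?thesis using restr_append[of g "take L x" "drop L x"] by simp
  qed
  then show ?thesis by blast
qed



lemma length_stake[simp]: "length (stake k w) = k" by (simp add: stake_def)
lemma nth_stake[simp]: "i < k \<Longrightarrow> stake k w ! i = w i" by (simp add: stake_def)
lemma sdrop_apply[simp]: "sdrop k w i = w (i + k)" by (simp add: sdrop_def)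

lemma stake_eqI: "(\<And>i. i < k \<Longrightarrow> w i = w' i) \<Longrightarrow> stake k w = stake k w'"
  by (simp add: stake_def)

lemma cyl_stake: "w \<in> cyl \<mu> \<Longrightarrow> stake (length \<mu>) w = \<mu>"
  by (auto simp: cyl_def intro!: nth_equalityI)

lemma take_stake: "j \<le> k \<Longrightarrow> take j (stake k w) = stake j w"
  by (auto intro!: nth_equalityI)

lemma drop_stake: "j \<le> k \<Longrightarrow> drop j (stake k w) = stake (k - j) (sdrop j w)"
  by (auto intro!: nth_equalityI simp: add.commute)

lemma stake_add: "stake (k + d) w = stake k w @ stake d (sdrop k w)"
proof (rule nth_equalityI)
  fix i assume "i < length (stake (k + d) w)"
  then show "stake (k + d) w ! i = (stake k w @ stake d (sdrop k w)) ! i"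
    by (cases "i < k") (simp_all add: nth_append)
qed simp

lemma sdrop_sdrop: "sdrop j (sdrop m w) = sdrop (m + j) w"
  by (auto simp: sdrop_def add.commute add.left_commute)

lemma conc_append: "conc a (conc b z) = conc (a @ b) z"
  by (auto simp: conc_def nth_append)

lemma stake_ones[simp]: "stake k ones = replicate k True"
  by (auto intro!: nth_equalityI simp: ones_def)

lemma sdrop_ones[simp]: "sdrop k ones = ones"
  by (simp add: sdrop_def ones_def)

lemma cyl_rep: "x \<in> cyl (replicate m True) \<longleftrightarrow> (\<forall>i<m. x i = True)"
  by (auto simp: cyl_def)

lemma cyl_stake_mem: "x \<in> cyl (stake L w) \<longleftrightarrow> (\<forall>i<L. x i = w i)"
  by (auto simp: cyl_def)

lemma cyl_open: "cantor_open (cyl p)"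
  unfolding cantor_open_def
proof
  fix w assume "w \<in> cyl p"
  then have "stake (length p) w = p" by (rule cyl_stake)
  then show "\<exists>k. cyl (stake k w) \<subseteq> cyl p" by (intro exI[of _ "length p"]) simp
qed

definition grk :: "nat \<Rightarrow> ismel \<Rightarrow> ismel \<Rightarrow> iword \<Rightarrow> bool" where
  "grk k s s' w \<longleftrightarrow> (case s of (\<eta>, g, \<mu>) \<Rightarrow> case s' of (\<eta>', g', \<mu>') \<Rightarrow>
     length \<mu> \<le> k \<and> length \<mu>' \<le> k \<and>
        \<mu> = take (length \<mu>) (stake k w) \<and> \<mu>' = take (length \<mu>') (stake k w) \<and>
        (\<eta> @ g (drop (length \<mu>) (stake k w)) = \<eta>' @ g' (drop (length \<mu>') (stake k w)) \<and>
         restr g (drop (length \<mu>) (stake k w)) = restr g' (drop (length \<mu>') (stake k w))))"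

lemma germ_rel_grk: "germ_rel (s, w) (s', w') \<longleftrightarrow> w = w' \<and> (\<exists>k. grk k s s' w)"
  by (cases s; cases s') (auto simp: grk_def Let_def)

lemma grk_stake: "stake k w = stake k w' \<Longrightarrow> grk k s s' w = grk k s s' w'"
  by (simp add: grk_def)

lemma grk_sym: "grk k s s' w \<Longrightarrow> grk k s' s w"
  by (cases s; cases s') (auto simp: grk_def)

lemma grk_raise:
  assumes "grk k (\<eta>, g, \<mu>) (\<eta>', g', \<mu>') w" "aut g" "aut g'" "k \<le> k'"
  shows "grk k' (\<eta>, g, \<mu>) (\<eta>', g', \<mu>') w"
proof -
  define \<delta> where "\<delta> = stake (k' - k) (sdrop k w)"
  have st: "stake k' w = stake k w @ \<delta>" unfolding \<delta>_def using stake_add[of k "k' - k" w] assms(4) by simp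
  define \<epsilon> where "\<epsilon> = drop (length \<mu>) (stake k w)"
  define \<epsilon>' where "\<epsilon>' = drop (length \<mu>') (stake k w)"
  from assms(1) have h: "length \<mu> \<le> k" "length \<mu>' \<le> k" "\<mu> = take (length \<mu>) (stake k w)"
     "\<mu>' = take (length \<mu>') (stake k w)" "\<eta> @ g \<epsilon> = \<eta>' @ g' \<epsilon>'" "restr g \<epsilon> = restr g' \<epsilon>'"
    unfolding grk_def \<epsilon>_def \<epsilon>'_def by auto
  have d1: "drop (length \<mu>) (stake k' w) = \<epsilon> @ \<delta>" unfolding st \<epsilon>_def using h(1) by simp
  have d2: "drop (length \<mu>') (stake k' w) = \<epsilon>' @ \<delta>" unfolding st \<epsilon>'_def using h(2) by simp
  have t1: "take (length \<mu>) (stake k' w) = take (length \<mu>) (stake k w)" unfolding st using h(1) by simp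
  have t2: "take (length \<mu>') (stake k' w) = take (length \<mu>') (stake k w)" unfolding st using h(2) by simp
  have "\<eta> @ g (\<epsilon> @ \<delta>) = \<eta>' @ g' (\<epsilon>' @ \<delta>)"
    using aut_app[OF assms(2), of \<epsilon> \<delta>] aut_app[OF assms(3), of \<epsilon>' \<delta>] h(5,6)
    by (metis append_assoc)
  moreover have "restr g (\<epsilon> @ \<delta>) = restr g' (\<epsilon>' @ \<delta>)" using h(6) by (simp add: restr_append)
  ultimately show ?thesis unfolding grk_def using h(1-4) t1 t2 d1 d2 assms(4) by simp
qed

lemma grk_trans:
  assumes "grk k1 (\<eta>1, g1, \<mu>1) (\<eta>2, g2, \<mu>2) w" "grk k2 (\<eta>2, g2, \<mu>2) (\<eta>3, g3, \<mu>3) w"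
    "aut g1" "aut g2" "aut g3"
  shows "grk (max k1 k2) (\<eta>1, g1, \<mu>1) (\<eta>3, g3, \<mu>3) w"
proof -
  have a: "grk (max k1 k2) (\<eta>1, g1, \<mu>1) (\<eta>2, g2, \<mu>2) w" using grk_raise[OF assms(1,3,4)] by simp
  have b: "grk (max k1 k2) (\<eta>2, g2, \<mu>2) (\<eta>3, g3, \<mu>3) w" using grk_raise[OF assms(2,4,5)] by simp
  from a b show ?thesis unfolding grk_def by auto
qed

context
  fixes n :: nat and \<alpha> :: "'f::field"
begin

definition valid :: "ismel \<Rightarrow> iword \<Rightarrow> bool" where
  "valid s w \<longleftrightarrow> s \<in> ISem n \<alpha> \<and> w \<in> cyl (mu s)"

lemma valid_aut: "valid (\<eta>, g, \<mu>) w \<Longrightarrow> aut g"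
  by (auto simp: valid_def ISem_def intro: Ggrp_aut)

lemma germ_rel_trans:
  assumes "valid s1 w1" "valid s2 w2" "valid s3 w3"
    "germ_rel (s1, w1) (s2, w2)" "germ_rel (s2, w2) (s3, w3)"
  shows "germ_rel (s1, w1) (s3, w3)"
proof -
  obtain \<eta>1 g1 \<mu>1 where s1: "s1 = (\<eta>1, g1, \<mu>1)" by (cases s1) auto
  obtain \<eta>2 g2 \<mu>2 where s2: "s2 = (\<eta>2, g2, \<mu>2)" by (cases s2) auto
  obtain \<eta>3 g3 \<mu>3 where s3: "s3 = (\<eta>3, g3, \<mu>3)" by (cases s3) auto
  show ?thesis using assms grk_trans[of _ \<eta>1 g1 \<mu>1 \<eta>2 g2 \<mu>2 w1 _ \<eta>3 g3 \<mu>3]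
      valid_aut[of \<eta>1 g1 \<mu>1] valid_aut[of \<eta>2 g2 \<mu>2] valid_aut[of \<eta>3 g3 \<mu>3]
    unfolding s1 s2 s3 germ_rel_grk by blast
qed

lemma germ_rel_sym: "germ_rel (s, w) (s', w') \<Longrightarrow> germ_rel (s', w') (s, w)"
  unfolding germ_rel_grk using grk_sym by blast

lemma germ_rel_refl: assumes "valid s w" shows "germ_rel (s, w) (s, w)"
proof -
  obtain \<eta> g \<mu> where s: "s = (\<eta>, g, \<mu>)" by (cases s) auto
  have "stake (length \<mu>) w = \<mu>" using assms cyl_stake unfolding valid_def s by simp
  then have "grk (length \<mu>) s s w" unfolding s grk_def by simp
  then show ?thesis unfolding germ_rel_grk by blast
qed

lemma germ_self: "valid s w \<Longrightarrow> (s, w) \<in> germ n \<alpha> s w"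
  using germ_rel_refl unfolding germ_def valid_def by auto

lemma germ_mem: "(p, x) \<in> germ n \<alpha> s w \<longleftrightarrow> valid p x \<and> germ_rel (p, x) (s, w)"
  unfolding germ_def valid_def by auto

lemma germ_eqD:
  assumes "valid s w" "germ n \<alpha> s w = germ n \<alpha> s' w'"
  shows "w = w' \<and> germ_rel (s, w) (s', w')"
proof -
  have "(s, w) \<in> germ n \<alpha> s' w'" using germ_self[OF assms(1)] assms(2) by simp
  then have "germ_rel (s, w) (s', w')" unfolding germ_mem by simp
  then show ?thesis using germ_rel_grk by blast
qed

lemma germ_eqI:
  assumes "valid s w" "valid s' w" "germ_rel (s, w) (s', w)"
  shows "germ n \<alpha> s w = germ n \<alpha> s' w"
proof (rule set_eqI)
  fix q :: "ismel \<times> iword"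
  obtain p x where q: "q = (p, x)" by (cases q) auto
  show "q \<in> germ n \<alpha> s w \<longleftrightarrow> q \<in> germ n \<alpha> s' w"
    unfolding q germ_mem using germ_rel_trans[of p x s w s' w] germ_rel_trans[of p x s' w s w]
      assms germ_rel_sym by blast
qed

lemma src_germ: assumes "valid s w" shows "src (germ n \<alpha> s w) = w"
  unfolding src_def
proof (rule the_equality)
  show "\<exists>s'. (s', w) \<in> germ n \<alpha> s w" using germ_self[OF assms] by blast
  fix w' assume "\<exists>s'. (s', w') \<in> germ n \<alpha> s w"
  then show "w' = w" unfolding germ_mem germ_rel_grk by auto
qed

end

lemma gact_split:
  assumes "aut g"
  shows "gact g y = conc (g (stake j y)) (gact (restr g (stake j y)) (sdrop j y))"
proof
  fix i
  have lg: "length (g (stake j y)) = j" using aut_len[OF assms] by simp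
  show "gact g y i = conc (g (stake j y)) (gact (restr g (stake j y)) (sdrop j y)) i"
  proof (cases "i < j")
    case True
    have "g (stake (Suc i) y) = take (Suc i) (g (stake j y))"
      using aut_take[OF assms, of "Suc i" "stake j y"] True take_stake[of "Suc i" j y] by simp
    then show ?thesis using True lg by (simp add: gact_def conc_def)
  next
    case False
    then obtain i' where i: "i = j + i'" by (metis le_add_diff_inverse not_less)
    have "stake (Suc i) y = stake j y @ stake (Suc i') (sdrop j y)"
      using stake_add[of j "Suc i'" y] i by simp
    then have "g (stake (Suc i) y) = g (stake j y) @ restr g (stake j y) (stake (Suc i') (sdrop j y))"
      using aut_app[OF assms] by simp
    then show ?thesis using i lg by (simp add: gact_def conc_def nth_append)
  qed
qed

lemma ismap_level:
  assumes "aut g" "length \<mu> \<le> k" "\<mu> = take (length \<mu>) (stake k w)"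
  shows "ismap (\<eta>, g, \<mu>) w = conc (\<eta> @ g (drop (length \<mu>) (stake k w)))
           (gact (restr g (drop (length \<mu>) (stake k w))) (sdrop k w))"
proof -
  have d: "drop (length \<mu>) (stake k w) = stake (k - length \<mu>) (sdrop (length \<mu>) w)"
    using drop_stake assms(2) by blast
  have "ismap (\<eta>, g, \<mu>) w = conc \<eta> (gact g (sdrop (length \<mu>) w))" by simp
  also have "\<dots> = conc \<eta> (conc (g (stake (k - length \<mu>) (sdrop (length \<mu>) w)))
      (gact (restr g (stake (k - length \<mu>) (sdrop (length \<mu>) w))) (sdrop (k - length \<mu>) (sdrop (length \<mu>) w))))"
    using gact_split[OF assms(1)] by metis
  also have "\<dots> = conc (\<eta> @ g (drop (length \<mu>) (stake k w)))
           (gact (restr g (drop (length \<mu>) (stake k w))) (sdrop k w))"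
    unfolding conc_append d sdrop_sdrop using assms(2) by simp
  finally show ?thesis .
qed

lemma ismap_grk:
  assumes "grk k s s' w" "s = (\<eta>, g, \<mu>)" "s' = (\<eta>', g', \<mu>')" "aut g" "aut g'"
  shows "ismap s w = ismap s' w"
proof -
  from assms(1) have h: "length \<mu> \<le> k" "length \<mu>' \<le> k" "\<mu> = take (length \<mu>) (stake k w)"
     "\<mu>' = take (length \<mu>') (stake k w)"
     "\<eta> @ g (drop (length \<mu>) (stake k w)) = \<eta>' @ g' (drop (length \<mu>') (stake k w))"
     "restr g (drop (length \<mu>) (stake k w)) = restr g' (drop (length \<mu>') (stake k w))"
    unfolding grk_def assms(2,3) by auto
  show ?thesis unfolding assms(2,3) ismap_level[OF assms(4) h(1,3)] ismap_level[OF assms(5) h(2,4)]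
    h(5,6) ..
qed



abbreviation zs :: "nat \<Rightarrow> 'f::field \<Rightarrow> 'f \<Rightarrow> ismel" where
  "zs n \<alpha> \<beta> \<equiv> ([], iota n \<alpha> \<beta>, [])"

abbreviation rep :: "nat \<Rightarrow> bool list" where
  "rep j \<equiv> replicate j True"

lemma iota_rep: "iota n \<alpha> \<beta> (rep j) = rep j"
  by (induction j arbitrary: \<beta>) auto

lemma iota_repF: "iota n \<alpha> \<beta> (rep j @ [False]) = rep j @ [False]"
  by (induction j arbitrary: \<beta>) auto

lemma restr_iota_rep: "restr (iota n \<alpha> \<beta>) (rep k) = iota n \<alpha> (\<alpha> ^ k * \<beta>)"
proof (induction k arbitrary: \<beta>)
  case 0 then show ?case by (simp add: restr_def)
next
  case (Suc k)
  have "restr (iota n \<alpha> \<beta>) (rep (Suc k)) = restr (restr (iota n \<alpha> \<beta>) [True]) (rep k)"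
    using restr_append[of _ "[True]" "rep k"] by simp
  also have "\<dots> = iota n \<alpha> (\<alpha> ^ k * (\<alpha> * \<beta>))" by (simp add: restr_iota_T Suc)
  finally show ?case by (simp add: mult.assoc mult.commute mult.left_commute)
qed

lemma valid_zs: "valid n \<alpha> (zs n \<alpha> \<beta>) x"
  by (auto simp: valid_def ISem_def cyl_def intro: Ggrp.Giota)

lemma ismap_zs: "ismap (zs n \<alpha> \<beta>) x = gact (iota n \<alpha> \<beta>) x"
  by (auto simp: conc_def sdrop_def)

lemma ismap_apply: "ismap (\<eta>, g, \<mu>) x i =
   (if i < length \<eta> then \<eta> ! i else g (stake (Suc (i - length \<eta>)) (sdrop (length \<mu>) x)) ! (i - length \<eta>))"
  by (simp add: conc_def gact_def)

lemma gact_apply: "gact g x i = g (stake (Suc i) x) ! i" by (simp add: gact_def)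

lemma Um_mem: "\<gamma> \<in> Um n \<alpha> m g \<longleftrightarrow> (\<exists>x \<in> cyl (rep m). \<gamma> = germ n \<alpha> ([], g, []) x)"
  unfolding Um_def Theta_def by auto

lemma Um_anti: "m \<le> m' \<Longrightarrow> Um n \<alpha> m' g \<subseteq> Um n \<alpha> m g"
  unfolding Um_def Theta_def by (auto simp: cyl_rep)

lemma eqF:
  assumes "valid n \<alpha> s x" "germ n \<alpha> s x = germ n \<alpha> (zs n \<alpha> \<beta>) x'"
  shows "x' = x \<and> ismap s x = gact (iota n \<alpha> \<beta>) x"
proof -
  obtain \<eta> g \<mu> where s: "s = (\<eta>, g, \<mu>)" by (cases s) auto
  from germ_eqD[OF assms] have xx: "x = x'" and r: "germ_rel (s, x) (zs n \<alpha> \<beta>, x')" by auto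
  then obtain k where "grk k s (zs n \<alpha> \<beta>) x" unfolding germ_rel_grk by auto
  then have "ismap s x = ismap (zs n \<alpha> \<beta>) x"
    using ismap_grk[of k s "zs n \<alpha> \<beta>" x \<eta> g \<mu> "[]" "iota n \<alpha> \<beta>" "[]"] s valid_aut assms(1) aut_iota
    by blast
  then show ?thesis using xx ismap_zs by simp
qed

lemma basisA:
  assumes "s \<in> ISem n \<alpha>" "U \<subseteq> cyl (mu s)" "cantor_open U"
    "germ n \<alpha> (zs n \<alpha> \<beta>) ones \<in> Theta n \<alpha> s U"
  shows "\<exists>m. Um n \<alpha> m (iota n \<alpha> \<beta>) \<subseteq> Theta n \<alpha> s U"
proof -
  obtain w where w: "w \<in> U" "germ n \<alpha> (zs n \<alpha> \<beta>) ones = germ n \<alpha> s w"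
    using assms(4) unfolding Theta_def by auto
  from germ_eqD[OF valid_zs w(2)] have wo: "w = ones" and r: "germ_rel (zs n \<alpha> \<beta>, ones) (s, w)" by auto
  then obtain k where k: "grk k (zs n \<alpha> \<beta>) s ones" unfolding germ_rel_grk by auto
  obtain j where j: "cyl (stake j ones) \<subseteq> U" using assms(3) w(1) wo unfolding cantor_open_def by blast
  have "Um n \<alpha> (max k j) (iota n \<alpha> \<beta>) \<subseteq> Theta n \<alpha> s U"
  proof
    fix \<gamma> assume "\<gamma> \<in> Um n \<alpha> (max k j) (iota n \<alpha> \<beta>)"
    then obtain x where x: "x \<in> cyl (rep (max k j))" "\<gamma> = germ n \<alpha> (zs n \<alpha> \<beta>) x"
      unfolding Um_mem by auto
    have "stake k x = stake k ones" using x(1) by (intro stake_eqI) (auto simp: cyl_rep ones_def)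
    then have "grk k (zs n \<alpha> \<beta>) s x" using k grk_stake by blast
    then have rx: "germ_rel (zs n \<alpha> \<beta>, x) (s, x)" unfolding germ_rel_grk by auto
    have xU: "x \<in> U" using j x(1) by (auto simp: cyl_rep)
    then have vx: "valid n \<alpha> s x" using assms(1,2) by (auto simp: valid_def)
    have "\<gamma> = germ n \<alpha> s x" using germ_eqI[OF valid_zs vx rx] x(2) by simp
    then show "\<gamma> \<in> Theta n \<alpha> s U" using xU unfolding Theta_def by auto
  qed
  then show ?thesis by blast
qed

lemma openA:
  assumes "generate_topology_on (germ_basis n \<alpha>) B"
  shows "germ n \<alpha> (zs n \<alpha> \<beta>) ones \<in> B \<Longrightarrow> \<exists>m. Um n \<alpha> m (iota n \<alpha> \<beta>) \<subseteq> B"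
  using assms
proof (induction rule: generate_topology_on.induct)
  case Empty then show ?case by simp
next
  case (Int a b)
  then obtain ma mb where "Um n \<alpha> ma (iota n \<alpha> \<beta>) \<subseteq> a" "Um n \<alpha> mb (iota n \<alpha> \<beta>) \<subseteq> b" by auto
  then have "Um n \<alpha> (max ma mb) (iota n \<alpha> \<beta>) \<subseteq> a \<inter> b"
    using Um_anti[of ma "max ma mb"] Um_anti[of mb "max ma mb"] by fastforce
  then show ?case by blast
next
  case (UN K)
  then obtain k where "k \<in> K" "germ n \<alpha> (zs n \<alpha> \<beta>) ones \<in> k" by auto
  then show ?case using UN.IH by blast
next
  case (Basis s)
  then obtain t U where "s = Theta n \<alpha> t U" "t \<in> ISem n \<alpha>" "U \<subseteq> cyl (mu t)" "cantor_open U"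
    unfolding germ_basis_def by auto
  then show ?case using basisA Basis.prems by blast
qed



lemma alpha_nz:
  fixes \<alpha> :: "'f::{field,finite}"
  assumes "CARD('f) = 2 ^ n" "n \<ge> 2" "\<forall>x::'f. x \<noteq> 0 \<longrightarrow> (\<exists>k::nat. x = \<alpha> ^ k)"
  shows "\<alpha> \<noteq> 0"
proof
  assume a: "\<alpha> = 0"
  have "(UNIV::'f set) \<subseteq> {0, 1}"
  proof
    fix x :: 'f
    show "x \<in> {0, 1}"
    proof (cases "x = 0")
      case False
      then obtain k where "x = \<alpha> ^ k" using assms(3) by blast
      then show ?thesis using a by (cases k) auto
    qed simp
  qed
  then have "CARD('f) \<le> card {0::'f, 1}" by (intro card_mono) auto
  then have "CARD('f) \<le> 2" by simp
  moreover have "(4::nat) \<le> 2 ^ n"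
  proof -
    have "(2::nat) ^ 2 \<le> 2 ^ n" using assms(2) by (intro power_increasing) auto
    then show ?thesis by simp
  qed
  ultimately show False using assms(1) by simp
qed

lemma gfix:
  assumes "aut g" "gact g ones = ones"
  shows "g (rep j) = rep j"
proof (rule nth_equalityI)
  show "length (g (rep j)) = length (rep j)" using aut_len[OF assms(1)] by simp
  fix i assume "i < length (g (rep j))"
  then have i: "i < j" using aut_len[OF assms(1)] by simp
  have "g (rep j) ! i = take (Suc i) (g (rep j)) ! i" using i by simp
  also have "\<dots> = g (rep (Suc i)) ! i" using aut_take[OF assms(1), of "Suc i" "rep j"] i by (simp add: min_def)
  also have "\<dots> = gact g ones i" by (simp add: gact_def)
  also have "\<dots> = True" using assms(2) by (simp add: ones_def)
  finally show "g (rep j) ! i = rep j ! i" using i by simp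
qed

lemma gfixF:
  assumes "aut g" "gact g ones = ones"
  shows "g (rep j @ [False]) = rep j @ [False]"
proof -
  have l: "length (g (rep j @ [False])) = Suc j" using aut_len[OF assms(1)] by simp
  have t: "take j (g (rep j @ [False])) = rep j"
    using aut_take[OF assms(1), of j "rep j @ [False]"] gfix[OF assms] by simp
  have "length (drop j (g (rep j @ [False]))) = 1" using l by simp
  then obtain c where "drop j (g (rep j @ [False])) = [c]" using len1 by blast
  then have c: "g (rep j @ [False]) = rep j @ [c]" using t append_take_drop_id[of j "g (rep j @ [False])"] by simp
  have "c = False"
  proof (rule ccontr)
    assume "c \<noteq> False"
    then have "g (rep j @ [False]) = g (rep (Suc j))" using c gfix[OF assms, of "Suc j"]
      by (simp add: replicate_append_same[symmetric])
    then have "rep j @ [False] = rep (Suc j)" using aut_bij[OF assms(1)] by (simp add: bij_def inj_eq)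
    then show False by (metis last_replicate last_snoc nat.distinct(1))
  qed
  then show ?thesis using c by simp
qed

lemma iso_ones:
  fixes \<alpha> :: "'f::{field,finite}"
  assumes "CARD('f) = 2 ^ n" "n \<ge> 1" "\<alpha> \<noteq> 0"
    "valid n \<alpha> (\<eta>, g, \<mu>) ones" "length \<eta> = length \<mu>" "\<eta> = rep (length \<eta>)"
    "\<And>j. g (rep j) = rep j"
  shows "\<exists>\<beta>. germ n \<alpha> (\<eta>, g, \<mu>) ones = germ n \<alpha> (zs n \<alpha> \<beta>) ones"
proof -
  have gG: "g \<in> Ggrp n \<alpha>" using assms(4) by (simp add: valid_def ISem_def)
  have ag: "aut g" using Ggrp_aut[OF gG] .
  obtain J where J: "\<And>x. length x \<ge> J \<Longrightarrow> restr g x \<in> Nuc n \<alpha>" using contraction[OF assms(1,2) gG] by blast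
  define r where "r = restr g (rep J)"
  have rN: "r \<in> Nuc n \<alpha>" using J r_def by simp
  have "r [True] = [True]"
    unfolding r_def restr_def using assms(7)[of "Suc J"] by (simp add: replicate_append_same[symmetric])
  then have "r \<noteq> flipa" by auto
  then obtain \<beta>'' where b'': "r = iota n \<alpha> \<beta>''" using rN unfolding Nuc_def by auto
  define k where "k = length \<mu> + J"
  define \<beta> where "\<beta> = \<beta>'' / \<alpha> ^ k"
  have ak: "\<alpha> ^ k * \<beta> = \<beta>''" unfolding \<beta>_def using assms(3) by simp
  have mu: "\<mu> = rep (length \<mu>)"
    using cyl_stake[of ones \<mu>] assms(4) by (simp add: valid_def)
  have "grk k (\<eta>, g, \<mu>) (zs n \<alpha> \<beta>) ones"
  proof -
    have d: "drop (length \<mu>) (rep k) = rep J" unfolding k_def by simp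
    have tk: "take (length \<mu>) (rep k) = rep (length \<mu>)" unfolding k_def by simp
    have e1: "\<eta> @ g (rep J) = rep k" using assms(5,6,7) unfolding k_def
      by (metis replicate_add)
    have e2: "restr g (rep J) = restr (iota n \<alpha> \<beta>) (rep k)"
      using b'' r_def restr_iota_rep ak by metis
    show ?thesis unfolding grk_def using d tk e1 e2 mu iota_rep[of n \<alpha> \<beta> k] k_def by auto
  qed
  then have "germ_rel ((\<eta>, g, \<mu>), ones) (zs n \<alpha> \<beta>, ones)" unfolding germ_rel_grk by auto
  then show ?thesis using germ_eqI[OF assms(4) valid_zs] by blast
qed



lemma ones_apply: "ones i = True" by (simp add: ones_def)

lemma stake_repF:
  assumes "\<And>i. i < k \<Longrightarrow> x i" "\<not> x k"
  shows "stake (Suc k) x = rep k @ [False]"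
proof (rule nth_equalityI)
  fix i assume "i < length (stake (Suc k) x)"
  then show "stake (Suc k) x ! i = (rep k @ [False]) ! i"
    using assms by (cases "i < k") (auto simp: nth_append less_Suc_eq)
qed simp

lemma stake_rep:
  assumes "\<And>i. i < k \<Longrightarrow> x i"
  shows "stake k x = rep k"
proof -
  have "stake k x = stake k ones" using assms by (intro stake_eqI) (auto simp: ones_def)
  then show ?thesis by simp
qed

lemma pointB:
  fixes \<alpha> :: "'f::{field,finite}"
  assumes "CARD('f) = 2 ^ n" "n \<ge> 1" "\<alpha> \<noteq> 0" "valid n \<alpha> s w"
    "w = ones \<longrightarrow> (\<forall>\<beta>. germ n \<alpha> s ones \<noteq> germ n \<alpha> (zs n \<alpha> \<beta>) ones)"
  shows "\<exists>L m. length (mu s) \<le> L \<and> (\<forall>x \<in> cyl (stake L w). \<forall>\<beta>. \<forall>x' \<in> cyl (rep m).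
            germ n \<alpha> s x \<noteq> germ n \<alpha> (zs n \<alpha> \<beta>) x')"
proof -
  obtain \<eta> g \<mu> where s: "s = (\<eta>, g, \<mu>)" by (cases s) auto
  have ag: "aut g" using valid_aut assms(4) s by blast
  have vx: "valid n \<alpha> s x" if "length \<mu> \<le> L" "x \<in> cyl (stake L w)" for L x
  proof -
    have "w \<in> cyl \<mu>" using assms(4) s by (simp add: valid_def)
    then show ?thesis using assms(4) that s by (auto simp: valid_def cyl_def)
  qed
  show ?thesis
  proof (cases "\<forall>i. w i")
    case False
    then obtain i where i: "\<not> w i" by blast
    have "\<forall>x \<in> cyl (stake (max (length \<mu>) (Suc i)) w). \<forall>\<beta>. \<forall>x' \<in> cyl (rep (Suc i)).
            germ n \<alpha> s x \<noteq> germ n \<alpha> (zs n \<alpha> \<beta>) x'"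
    proof (intro ballI allI notI)
      fix x \<beta> x' assume x: "x \<in> cyl (stake (max (length \<mu>) (Suc i)) w)" "x' \<in> cyl (rep (Suc i))"
        "germ n \<alpha> s x = germ n \<alpha> (zs n \<alpha> \<beta>) x'"
      have "x' = x" using eqF[OF vx[OF _ x(1)] x(3)] by simp
      moreover have "x' i" using x(2) unfolding cyl_rep by simp
      moreover have "x i = w i" using x(1) unfolding cyl_stake_mem by simp
      ultimately show False using i by simp
    qed
    then show ?thesis using s by (intro exI[of _ "max (length \<mu>) (Suc i)"] exI[of _ "Suc i"]) auto
  next
    case True
    then have wo: "w = ones" by (auto simp: ones_def)
    show ?thesis
    proof (cases "\<exists>p. \<not> ismap s ones p")
      case True
      then obtain p where p: "\<not> ismap s ones p" by blast
      define L where "L = length \<mu> + Suc p"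
      have "\<forall>x \<in> cyl (stake L w). \<forall>\<beta>. \<forall>x' \<in> cyl (rep (Suc p)).
            germ n \<alpha> s x \<noteq> germ n \<alpha> (zs n \<alpha> \<beta>) x'"
      proof (intro ballI allI notI)
        fix x \<beta> x' assume x: "x \<in> cyl (stake L w)" "x' \<in> cyl (rep (Suc p))"
          "germ n \<alpha> s x = germ n \<alpha> (zs n \<alpha> \<beta>) x'"
        have e: "x' = x \<and> ismap s x = gact (iota n \<alpha> \<beta>) x" using eqF[OF vx[OF _ x(1)] x(3)] L_def by simp
        have xt: "x i" if "i < L" for i using x(1) that wo by (auto simp: cyl_stake_mem ones_def)
        have "stake (Suc (p - length \<eta>)) (sdrop (length \<mu>) x) = stake (Suc (p - length \<eta>)) (sdrop (length \<mu>) ones)"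
          using xt by (intro stake_eqI) (auto simp: ones_def L_def)
        then have "ismap s x p = ismap s ones p" unfolding s ismap_apply by simp
        moreover have "gact (iota n \<alpha> \<beta>) x p"
        proof -
          have "\<forall>i<Suc p. x' i = True" using x(2) unfolding cyl_rep .
          then have "stake (Suc p) x = rep (Suc p)" using e by (intro stake_rep) auto
          then show ?thesis by (simp add: gact_apply iota_rep del: replicate_Suc)
        qed
        ultimately show False using p e by simp
      qed
      then show ?thesis using s L_def by (intro exI[of _ L] exI[of _ "Suc p"]) auto
    next
      case False
      then have all: "\<And>p. ismap s ones p" by blast
      have eta: "\<eta> = rep (length \<eta>)"
      proof (rule nth_equalityI)
        fix i assume "i < length \<eta>"
        then show "\<eta> ! i = rep (length \<eta>) ! i" using all[of i] unfolding s ismap_apply by simp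
      qed simp
      have gones: "gact g ones = ones"
      proof
        fix i show "gact g ones i = ones i"
          using all[of "i + length \<eta>"] unfolding s ismap_apply by (simp add: gact_apply ones_apply)
      qed
      note gf = gfix[OF ag gones] and gF = gfixF[OF ag gones]
      show ?thesis
      proof (cases "length \<eta> = length \<mu>")
        case True
        have "\<exists>\<beta>. germ n \<alpha> (\<eta>, g, \<mu>) ones = germ n \<alpha> (zs n \<alpha> \<beta>) ones"
          using iso_ones[OF assms(1-3) _ True eta gf] assms(4) s wo by simp
        then show ?thesis using assms(5) s wo by auto
      next
        case neq: False
        have "\<forall>x \<in> cyl (stake (length \<mu>) w). \<forall>\<beta>. \<forall>x' \<in> cyl (rep (length \<mu>)).
            germ n \<alpha> s x \<noteq> germ n \<alpha> (zs n \<alpha> \<beta>) x'"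
        proof (intro ballI allI notI)
          fix x \<beta> x' assume x: "x \<in> cyl (stake (length \<mu>) w)" "x' \<in> cyl (rep (length \<mu>))"
            "germ n \<alpha> s x = germ n \<alpha> (zs n \<alpha> \<beta>) x'"
          have e: "x' = x" and IM: "ismap s x = gact (iota n \<alpha> \<beta>) x"
            using eqF[OF vx[OF _ x(1)] x(3)] by auto
          show False
          proof (cases "x = ones")
            case True
            then show False using x(3) e assms(5) wo by auto
          next
            case False
            then have "\<exists>k. \<not> x k" by (auto simp: ones_def)
            define k0 where "k0 = (LEAST k. \<not> x k)"
            have xk0: "\<not> x k0" unfolding k0_def using LeastI_ex[OF \<open>\<exists>k. \<not> x k\<close>] .
            have xlt: "x i" if "i < k0" for i using not_less_Least[OF that[unfolded k0_def]] by simp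
            have k0mu: "length \<mu> \<le> k0" using x(2) e xk0 by (metis cyl_rep not_le)
            have GI: "gact (iota n \<alpha> \<beta>) x i" if "i < k0" for i
            proof -
              have "stake (Suc i) x = rep (Suc i)" using xlt that by (intro stake_rep) auto
              then show ?thesis by (simp add: gact_apply iota_rep del: replicate_Suc)
            qed
            have GK: "\<not> gact (iota n \<alpha> \<beta>) x k0"
            proof -
              have "stake (Suc k0) x = rep k0 @ [False]" using xlt xk0 by (intro stake_repF) auto
              then show ?thesis by (simp add: gact_apply iota_repF nth_append)
            qed
            have SI: "ismap s x q" if "q < length \<eta>" for q
              using that eta unfolding s ismap_apply by (metis nth_replicate)
            have SJ: "ismap s x (length \<eta> + j)" if "length \<mu> + j < k0" for j
            proof -
              have "stake (Suc j) (sdrop (length \<mu>) x) = rep (Suc j)"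
                using xlt that by (intro stake_rep) auto
              then show ?thesis unfolding s ismap_apply by (simp add: gf del: replicate_Suc)
            qed
            have SK: "\<not> ismap s x (length \<eta> + (k0 - length \<mu>))"
            proof -
              have "stake (Suc (k0 - length \<mu>)) (sdrop (length \<mu>) x) = rep (k0 - length \<mu>) @ [False]"
                using xlt xk0 k0mu by (intro stake_repF) auto
              then show ?thesis unfolding s ismap_apply by (simp add: gF nth_append)
            qed
            show False
            proof (cases "length \<mu> < length \<eta>")
              case True
              have "ismap s x k0"
              proof (cases "k0 < length \<eta>")
                case True then show ?thesis using SI by simp
              next
                case False
                then have "k0 = length \<eta> + (k0 - length \<eta>)" "length \<mu> + (k0 - length \<eta>) < k0"
                  using \<open>length \<mu> < length \<eta>\<close> by auto
                then show ?thesis using SJ by metis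
              qed
              then show False using IM GK by simp
            next
              case False
              then have lt: "length \<eta> + (k0 - length \<mu>) < k0" using neq k0mu by auto
              show False using SK GI[OF lt] IM by simp
            qed
          qed
        qed
        then show ?thesis using s by (intro exI[of _ "length \<mu>"] exI[of _ "length \<mu>"]) auto
      qed
    qed
  qed
qed



lemma caseB:
  fixes \<alpha> :: "'f::{field,finite}"
  assumes "CARD('f) = 2 ^ n" "n \<ge> 1" "\<alpha> \<noteq> 0" "compact_open_bisection n \<alpha> B"
    "\<forall>\<beta>. germ n \<alpha> (zs n \<alpha> \<beta>) ones \<notin> B"
  shows "\<exists>m0. \<forall>m\<ge>m0. \<forall>\<beta>. B \<inter> Um n \<alpha> m (iota n \<alpha> \<beta>) = {}"
proof -
  have ex: "\<forall>\<gamma>\<in>B. \<exists>V m. openin (germ_top n \<alpha>) V \<and> \<gamma> \<in> V \<and>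
              (\<forall>m'\<ge>m. \<forall>\<beta>. V \<inter> Um n \<alpha> m' (iota n \<alpha> \<beta>) = {})"
  proof
    fix \<gamma> assume \<gamma>B: "\<gamma> \<in> B"
    then have "\<gamma> \<in> Groupoid n \<alpha>" using assms(4) by (auto simp: compact_open_bisection_def)
    then obtain s w where sw: "\<gamma> = germ n \<alpha> s w" "s \<in> ISem n \<alpha>" "w \<in> cyl (mu s)"
      unfolding Groupoid_def by auto
    have v: "valid n \<alpha> s w" using sw by (simp add: valid_def)
    have h5: "w = ones \<longrightarrow> (\<forall>\<beta>. germ n \<alpha> s ones \<noteq> germ n \<alpha> (zs n \<alpha> \<beta>) ones)"
      using assms(5) \<gamma>B sw(1) by auto
    obtain L m where Lm: "length (mu s) \<le> L"
      "\<forall>x \<in> cyl (stake L w). \<forall>\<beta>. \<forall>x' \<in> cyl (rep m). germ n \<alpha> s x \<noteq> germ n \<alpha> (zs n \<alpha> \<beta>) x'"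
      using pointB[OF assms(1-3) v h5] by blast
    define V where "V = Theta n \<alpha> s (cyl (stake L w))"
    have sub: "cyl (stake L w) \<subseteq> cyl (mu s)" using sw(3) Lm(1) by (auto simp: cyl_def)
    have "V \<in> germ_basis n \<alpha>" unfolding V_def germ_basis_def using sw(2) sub cyl_open by blast
    then have op: "openin (germ_top n \<alpha>) V"
      unfolding germ_top_def openin_topology_generated_by_iff by (rule generate_topology_on.Basis)
    have gV: "\<gamma> \<in> V" unfolding V_def Theta_def using sw(1) by (auto simp: cyl_def)
    have "\<forall>m'\<ge>m. \<forall>\<beta>. V \<inter> Um n \<alpha> m' (iota n \<alpha> \<beta>) = {}"
    proof (intro allI impI)
      fix m' \<beta> assume mm: "m \<le> m'"
      show "V \<inter> Um n \<alpha> m' (iota n \<alpha> \<beta>) = {}"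
      proof (rule ccontr)
        assume "V \<inter> Um n \<alpha> m' (iota n \<alpha> \<beta>) \<noteq> {}"
        then obtain \<delta> where d: "\<delta> \<in> V" "\<delta> \<in> Um n \<alpha> m' (iota n \<alpha> \<beta>)" by blast
        obtain x where x: "x \<in> cyl (stake L w)" "\<delta> = germ n \<alpha> s x" using d(1) unfolding V_def Theta_def by auto
        obtain x' where x': "x' \<in> cyl (rep m')" "\<delta> = germ n \<alpha> (zs n \<alpha> \<beta>) x'" using d(2) unfolding Um_mem by auto
        have "x' \<in> cyl (rep m)" using x'(1) mm by (auto simp: cyl_rep)
        then show False using Lm(2) x x' by metis
      qed
    qed
    then show "\<exists>V m. openin (germ_top n \<alpha>) V \<and> \<gamma> \<in> V \<and>
              (\<forall>m'\<ge>m. \<forall>\<beta>. V \<inter> Um n \<alpha> m' (iota n \<alpha> \<beta>) = {})" using op gV by blast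
  qed
  obtain V M where VM: "\<And>\<gamma>. \<gamma> \<in> B \<Longrightarrow> openin (germ_top n \<alpha>) (V \<gamma>) \<and> \<gamma> \<in> V \<gamma> \<and>
              (\<forall>m'\<ge>M \<gamma>. \<forall>\<beta>. V \<gamma> \<inter> Um n \<alpha> m' (iota n \<alpha> \<beta>) = {})"
    using bchoice[OF ex] by (metis (no_types))
  have comp: "compactin (germ_top n \<alpha>) B" using assms(4) by (simp add: compact_open_bisection_def)
  have "(\<forall>U \<in> V ` B. openin (germ_top n \<alpha>) U) \<and> B \<subseteq> \<Union>(V ` B)" using VM by blast
  then obtain F where F: "finite F" "F \<subseteq> V ` B" "B \<subseteq> \<Union>F" using comp unfolding compactin_def by meson
  then obtain B' where B': "B' \<subseteq> B" "finite B'" "F = V ` B'" using finite_subset_image by metis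
  define m0 where "m0 = Max (insert 0 (M ` B'))"
  show ?thesis
  proof (intro exI[of _ m0] allI impI)
    fix m \<beta> assume mm: "m0 \<le> m"
    show "B \<inter> Um n \<alpha> m (iota n \<alpha> \<beta>) = {}"
    proof (rule ccontr)
      assume "B \<inter> Um n \<alpha> m (iota n \<alpha> \<beta>) \<noteq> {}"
      then obtain \<delta> where d: "\<delta> \<in> B" "\<delta> \<in> Um n \<alpha> m (iota n \<alpha> \<beta>)" by blast
      then obtain \<gamma>' where g': "\<gamma>' \<in> B'" "\<delta> \<in> V \<gamma>'" using F(3) B'(3) by blast
      have "M \<gamma>' \<le> m0" unfolding m0_def using B'(2) g'(1) by (intro Max_ge) auto
      moreover have "\<gamma>' \<in> B" using g'(1) B'(1) by blast
      ultimately have "V \<gamma>' \<inter> Um n \<alpha> m (iota n \<alpha> \<beta>) = {}" using VM[of \<gamma>'] mm by (meson order_trans)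
      then show False using d g' by blast
    qed
  qed
qed

lemma perB:
  fixes \<alpha> :: "'f::{field,finite}"
  assumes "CARD('f) = 2 ^ n" "n \<ge> 1" "\<alpha> \<noteq> 0" "compact_open_bisection n \<alpha> B"
  shows "\<exists>m0 (d :: taut \<Rightarrow> 'k::field). \<forall>m\<ge>m0. \<forall>\<gamma> \<in> (\<Union>g\<in>N0 n \<alpha>. Um n \<alpha> m g).
            indicator B \<gamma> = (\<Sum>g\<in>N0 n \<alpha>. d g * indicator (Um n \<alpha> m g) \<gamma>)"
proof (cases "\<exists>\<beta>. germ n \<alpha> (zs n \<alpha> \<beta>) ones \<in> B")
  case True
  then obtain \<beta> where zB: "germ n \<alpha> (zs n \<alpha> \<beta>) ones \<in> B" by blast
  have "generate_topology_on (germ_basis n \<alpha>) B" using assms(4)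
    by (simp add: compact_open_bisection_def germ_top_def openin_topology_generated_by_iff)
  then obtain m0 where m0: "Um n \<alpha> m0 (iota n \<alpha> \<beta>) \<subseteq> B" using openA zB by blast
  have fin: "finite (N0 n \<alpha>)" unfolding N0_def by simp
  have inN: "iota n \<alpha> \<beta> \<in> N0 n \<alpha>" unfolding N0_def by simp
  have injsrc: "inj_on src B" using assms(4) by (simp add: compact_open_bisection_def)
  show ?thesis
  proof (intro exI[of _ m0] exI[of _ "\<lambda>g. if g = iota n \<alpha> \<beta> then (1::'k) else 0"] allI impI ballI)
    fix m \<gamma> assume mm: "m0 \<le> m" and gU: "\<gamma> \<in> (\<Union>g\<in>N0 n \<alpha>. Um n \<alpha> m g)"
    have sum: "(\<Sum>g\<in>N0 n \<alpha>. (if g = iota n \<alpha> \<beta> then (1::'k) else 0) * indicator (Um n \<alpha> m g) \<gamma>)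
        = indicator (Um n \<alpha> m (iota n \<alpha> \<beta>)) \<gamma>"
    proof -
      have "(\<Sum>g\<in>N0 n \<alpha>. (if g = iota n \<alpha> \<beta> then (1::'k) else 0) * indicator (Um n \<alpha> m g) \<gamma>)
          = (\<Sum>g\<in>N0 n \<alpha>. if g = iota n \<alpha> \<beta> then indicator (Um n \<alpha> m g) \<gamma> else 0)"
        by (intro sum.cong) auto
      also have "\<dots> = indicator (Um n \<alpha> m (iota n \<alpha> \<beta>)) \<gamma>" using fin inN by (simp add: sum.delta')
      finally show ?thesis .
    qed
    have sub: "Um n \<alpha> m (iota n \<alpha> \<beta>) \<subseteq> B" using Um_anti[OF mm] m0 by blast
    have "\<gamma> \<in> B \<longleftrightarrow> \<gamma> \<in> Um n \<alpha> m (iota n \<alpha> \<beta>)"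
    proof
      assume \<gamma>B: "\<gamma> \<in> B"
      from gU obtain g where g: "g \<in> N0 n \<alpha>" "\<gamma> \<in> Um n \<alpha> m g" by blast
      then obtain h where h: "g = iota n \<alpha> h" unfolding N0_def by auto
      obtain x where x: "x \<in> cyl (rep m)" "\<gamma> = germ n \<alpha> (zs n \<alpha> h) x" using g(2) h unfolding Um_mem by auto
      define \<delta> where "\<delta> = germ n \<alpha> (zs n \<alpha> \<beta>) x"
      have dU: "\<delta> \<in> Um n \<alpha> m (iota n \<alpha> \<beta>)" unfolding \<delta>_def Um_mem using x(1) by blast
      have "src \<gamma> = x" "src \<delta> = x" using x(2) src_germ[OF valid_zs] \<delta>_def by auto
      moreover have "\<delta> \<in> B" using dU sub by blast
      ultimately have "\<gamma> = \<delta>" using injsrc \<gamma>B unfolding inj_on_def by auto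
      then show "\<gamma> \<in> Um n \<alpha> m (iota n \<alpha> \<beta>)" using dU by simp
    next
      assume "\<gamma> \<in> Um n \<alpha> m (iota n \<alpha> \<beta>)"
      then show "\<gamma> \<in> B" using sub by blast
    qed
    then show "indicator B \<gamma> = (\<Sum>g\<in>N0 n \<alpha>. (if g = iota n \<alpha> \<beta> then (1::'k) else 0) * indicator (Um n \<alpha> m g) \<gamma>)"
      using sum by (simp add: indicator_def)
  qed
next
  case False
  then obtain m0 where m0: "\<forall>m\<ge>m0. \<forall>\<beta>. B \<inter> Um n \<alpha> m (iota n \<alpha> \<beta>) = {}"
    using caseB[OF assms] by blast
  show ?thesis
  proof (intro exI[of _ m0] exI[of _ "\<lambda>g. (0::'k)"] allI impI ballI)
    fix m \<gamma> assume mm: "m0 \<le> m" and gU: "\<gamma> \<in> (\<Union>g\<in>N0 n \<alpha>. Um n \<alpha> m g)"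
    then obtain \<beta> where "\<gamma> \<in> Um n \<alpha> m (iota n \<alpha> \<beta>)" unfolding N0_def by auto
    then have "\<gamma> \<notin> B" using m0 mm by blast
    then show "indicator B \<gamma> = (\<Sum>g\<in>N0 n \<alpha>. (0::'k) * indicator (Um n \<alpha> m g) \<gamma>)" by simp
  qed
qed

theorem mainTheorem9:
  fixes n :: nat and \<alpha> :: "'f::{field,finite}" and f :: "germ \<Rightarrow> 'k::field"
  assumes "n \<ge> 2"
    and "CARD('f) = 2 ^ n"
    and "\<forall>x::'f. x \<noteq> 0 \<longrightarrow> (\<exists>k::nat. x = \<alpha> ^ k)"
    and "f \<in> steinberg n \<alpha>"
  shows "\<exists>m\<ge>1. \<exists>c :: taut \<Rightarrow> 'k.
           \<forall>\<gamma> \<in> (\<Union>g\<in>N0 n \<alpha>. Um n \<alpha> m g).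
             f \<gamma> = (\<Sum>g\<in>N0 n \<alpha>. c g * indicator (Um n \<alpha> m g) \<gamma>)"
proof -
  obtain I :: "nat set" and c :: "nat \<Rightarrow> 'k" and B where IcB: "finite I"
    "\<forall>i\<in>I. compact_open_bisection n \<alpha> (B i)" "f = (\<lambda>\<gamma>. \<Sum>i\<in>I. c i * indicator (B i) \<gamma>)"
    using assms(4) unfolding steinberg_def by blast
  have n1: "n \<ge> 1" using assms(1) by simp
  have a0: "\<alpha> \<noteq> 0" using alpha_nz[OF assms(2,1,3)] .
  have "\<forall>i\<in>I. \<exists>m0 (d :: taut \<Rightarrow> 'k). \<forall>m\<ge>m0. \<forall>\<gamma> \<in> (\<Union>g\<in>N0 n \<alpha>. Um n \<alpha> m g).
            indicator (B i) \<gamma> = (\<Sum>g\<in>N0 n \<alpha>. d g * indicator (Um n \<alpha> m g) \<gamma>)"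
    using perB[OF assms(2) n1 a0] IcB(2) by blast
  from bchoice[OF this] obtain M where "\<forall>i\<in>I. \<exists>d :: taut \<Rightarrow> 'k. \<forall>m\<ge>M i. \<forall>\<gamma> \<in> (\<Union>g\<in>N0 n \<alpha>. Um n \<alpha> m g).
            indicator (B i) \<gamma> = (\<Sum>g\<in>N0 n \<alpha>. d g * indicator (Um n \<alpha> m g) \<gamma>)" by blast
  from bchoice[OF this] obtain D where MD: "\<forall>i\<in>I. \<forall>m\<ge>M i. \<forall>\<gamma> \<in> (\<Union>g\<in>N0 n \<alpha>. Um n \<alpha> m g).
            indicator (B i) \<gamma> = (\<Sum>g\<in>N0 n \<alpha>. (D i g :: 'k) * indicator (Um n \<alpha> m g) \<gamma>)" by blast
  define m where "m = Max (insert 1 (M ` I))"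
  have m1: "m \<ge> 1" unfolding m_def using IcB(1) by simp
  have mM: "M i \<le> m" if "i \<in> I" for i unfolding m_def using IcB(1) that by (intro Max_ge) auto
  show ?thesis
  proof (intro exI[of _ m] conjI m1 exI[of _ "\<lambda>g. \<Sum>i\<in>I. c i * D i g"] ballI)
    fix \<gamma> assume gU: "\<gamma> \<in> (\<Union>g\<in>N0 n \<alpha>. Um n \<alpha> m g)"
    have "f \<gamma> = (\<Sum>i\<in>I. c i * indicator (B i) \<gamma>)" using IcB(3) by simp
    also have "\<dots> = (\<Sum>i\<in>I. c i * (\<Sum>g\<in>N0 n \<alpha>. D i g * indicator (Um n \<alpha> m g) \<gamma>))"
      using MD mM gU by (intro sum.cong) auto
    also have "\<dots> = (\<Sum>i\<in>I. \<Sum>g\<in>N0 n \<alpha>. c i * D i g * indicator (Um n \<alpha> m g) \<gamma>)"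
      by (simp add: sum_distrib_left mult.assoc)
    also have "\<dots> = (\<Sum>g\<in>N0 n \<alpha>. \<Sum>i\<in>I. c i * D i g * indicator (Um n \<alpha> m g) \<gamma>)"
      by (rule sum.swap)
    also have "\<dots> = (\<Sum>g\<in>N0 n \<alpha>. (\<Sum>i\<in>I. c i * D i g) * indicator (Um n \<alpha> m g) \<gamma>)"
      by (simp add: sum_distrib_right)
    finally show "f \<gamma> = (\<Sum>g\<in>N0 n \<alpha>. (\<Sum>i\<in>I. c i * D i g) * indicator (Um n \<alpha> m g) \<gamma>)" .
  qed
qed


end
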